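(* Let $P\subset\mathbb{R}^d$ be a simple $d$-dimensional polytope with facets $\sigma_1,\dots,\sigma_N$, and let $q_1,\dots,q_N\in\mathbb{C}$ be arbitrary weights assigned to these facets. Then, as functions on $\mathbb{R}^d$, $$\mathbf 1^w_P=\sum_{F\preceq P}(-1)^{\dim F}\,\mathbf 1^w_{\mathbf C_F},$$ where the sum runs over all nonempty faces $F$ of $P$ (including $F=P$, for which $\mathbf C_P=\mathbb{R}^d$ and $\mathbf 1^w_{\mathbf C_P}\equiv 1$).
   Context: A $d$-dimensional polyhedron $Q\subset\mathbb{R}^d$ is written irredundantly as $Q=H_1\cap\dots\cap H_N$ with $H_i=\{x:\langle u_i,x\rangle+\mu_i\ge 0\}$, $u_i\in(\mathbb{R}^d)^*$, $\mu_i\in\mathbb{R}$, $N$ minimal; its facets are $\sigma_i=Q\cap\partial H_i$. A polytope is a bounded polyhedron. $P$ is simple if every vertex lies in exactly $d$ facets. For a nonempty face $F$ of $P$, $I_F$ denotes the set of indices $i$ with $F\subseteq\sigma_i$ (so $F=\bigcap_{i\in I_F}\sigma_i$ for proper faces, and $I_P=\emptyset$). Weighted characteristic function: given complex weights $q_i$ on the facets $\sigma_i$ of a polyhedron $Q$, define $\mathbf 1^w_Q:\mathbb{R}^d\to\mathbb{C}$ by $\mathbf 1^w_Q(x)=0$ if $x\notin Q$, and $\mathbf 1^w_Q(x)=\prod_{i\in I_F}q_i$ if $x\in Q$, where $F$ is the smallest face of $Q$ containing $x$ (equivalently the product of $q_i$ over those facets containing $x$; it equals $1$ for $x$ in the interior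 of $Q$). Tangent cone: for a face $F$ of $P$, $\mathbf C_F=\{y+r(x-y): r\ge 0,\ y\in F,\ x\in P\}$. It is the polyhedron $\bigcap_{i\in I_F}H_i$, whose facets are $\mathbf C_F\cap\partial H_i$ for $i\in I_F$; the facet $\mathbf C_F\cap\partial H_i$ is given the same weight $q_i$ as $\sigma_i$, and $\mathbf 1^w_{\mathbf C_F}$ is the weighted characteristic function of $\mathbf C_F$ with these weights. *)

theory Defs
  imports "HOL-Analysis.Analysis"
begin

definition simple_polytope :: "'a::euclidean_space set \<Rightarrow> bool" where
  "simple_polytope P \<longleftrightarrow> polytope P \<and>
     (\<forall>v. v extreme_point_of P \<longrightarrow> card {S. S facet_of P \<and> v \<in> S} = DIM('a))"

definition wchar :: "'a::euclidean_space set \<Rightarrow> ('a set \<Rightarrow> complex) \<Rightarrow> 'a \<Rightarrow> complex" where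
  "wchar Q w x = (if x \<in> Q then (\<Prod>T\<in>{T. T facet_of Q \<and> x \<in> T}. w T) else 0)"

definition tangent_cone :: "'a::euclidean_space set \<Rightarrow> 'a set \<Rightarrow> 'a set" where
  "tangent_cone P F = {y + r *\<^sub>R (x - y) | r y x. r \<ge> 0 \<and> y \<in> F \<and> x \<in> P}"

definition cone_weight :: "'a::euclidean_space set \<Rightarrow> 'a set \<Rightarrow> ('a set \<Rightarrow> complex) \<Rightarrow> 'a set \<Rightarrow> complex" where
  "cone_weight P F q T =
     q (THE S. S facet_of P \<and> F \<subseteq> S \<and> T = tangent_cone P F \<inter> affine hull S)"

end

theory Submission
  imports Defs
begin

locale sp =
  fixes P :: "'a::euclidean_space set" and a :: "'a set \<Rightarrow> 'a" and b :: "'a set \<Rightarrow> real"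
  assumes simple: "simple_polytope P" and full: "aff_dim P = int DIM('a)"
  and ab: "\<And>S. S facet_of P \<Longrightarrow> a S \<noteq> 0 \<and> P \<subseteq> {x. a S \<bullet> x \<le> b S} \<and> S = P \<inter> {x. a S \<bullet> x = b S}"
begin

definition "Fs = {S. S facet_of P}"
definition "sg S y = b S - a S \<bullet> y"
definition "V = {v. v extreme_point_of P}"
definition "I v = {S \<in> Fs. v \<in> S}"
definition "h J = {y \<in> P. \<forall>S\<in>J. sg S y = 0}"

lemma polytopeP: "polytope P" using simple by (simp add: simple_polytope_def)
lemma polyhedronP: "polyhedron P" by (simp add: polytopeP polytope_imp_polyhedron)
lemma convexP: "convex P" by (simp add: polytopeP polytope_imp_convex)
lemma compactP: "compact P" by (simp add: polytopeP polytope_imp_compact)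
lemma closedP: "closed P" by (simp add: polytopeP polytope_imp_closed)
lemma finite_Fs: "finite Fs" unfolding Fs_def by (simp add: finite_polytope_facets polytopeP)
lemma finite_V: "finite V" unfolding V_def by (simp add: finite_polyhedron_extreme_points polyhedronP)
lemma nonemptyP: "P \<noteq> {}" using full by auto
lemma ahull: "affine hull P = UNIV" using full aff_dim_eq_full by blast

lemma sg_ge: "S \<in> Fs \<Longrightarrow> y \<in> P \<Longrightarrow> sg S y \<ge> 0"
  using ab unfolding Fs_def sg_def by fastforce

lemma facet_eq: "S \<in> Fs \<Longrightarrow> S = {y\<in>P. sg S y = 0}"
proof -
  assume "S \<in> Fs"
  then have "S = P \<inter> {x. a S \<bullet> x = b S}" using ab[of S] unfolding Fs_def by auto
  then have "\<And>y. y \<in> S \<longleftrightarrow> y \<in> P \<and> a S \<bullet> y = b S" by blast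
  then show ?thesis unfolding sg_def by (intro set_eqI) (simp, linarith)
qed

lemma a_nz: "S \<in> Fs \<Longrightarrow> a S \<noteq> 0"
  using ab unfolding Fs_def by auto

lemma interior_pt: obtains p where "p \<in> interior P" 
proof -
  have "rel_interior P \<noteq> {}" using convexP nonemptyP rel_interior_eq_empty by blast
  then show ?thesis using that rel_interior_interior[OF ahull] by blast
qed

lemma interior_sg: assumes "p \<in> interior P" "S \<in> Fs" shows "sg S p > 0"
proof -
  obtain e where e: "e > 0" "ball p e \<subseteq> P" using assms(1) by (meson mem_interior)
  define u where "u = (e/2 / norm (a S)) *\<^sub>R a S"
  have na: "norm (a S) > 0" using a_nz assms by auto
  have "norm u = e/2" using na e unfolding u_def by simp
  then have "p + u \<in> P" using e by (auto simp: dist_norm intro!: subsetD[OF e(2)])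
  then have s1: "sg S (p + u) \<ge> 0" using sg_ge assms by blast
  have aa: "a S \<bullet> a S = norm (a S) * norm (a S)" by (simp add: power2_norm_eq_inner[symmetric] power2_eq_square)
  have s2: "a S \<bullet> u = e/2 * norm (a S)" 
    using na unfolding u_def by (simp only: inner_scaleR_right aa) (simp add: field_simps)
  have "e * norm (a S) > 0" using e na by simp
  then show ?thesis using s1 s2 unfolding sg_def by (simp add: inner_add_right)
qed

lemma P_eq: "P = {y. \<forall>S\<in>Fs. sg S y \<ge> 0}"
proof
  show "P \<subseteq> {y. \<forall>S\<in>Fs. sg S y \<ge> 0}" using sg_ge by blast
  show "{y. \<forall>S\<in>Fs. sg S y \<ge> 0} \<subseteq> P"
  proof (rule ccontr)
    assume "\<not> ?thesis"
    then obtain y where y: "\<forall>S\<in>Fs. sg S y \<ge> 0" "y \<notin> P" by blast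
    obtain p where p: "p \<in> interior P" using interior_pt by blast
    have pP: "p \<in> P" using p interior_subset by blast
    have "closed_segment p y \<inter> frontier P \<noteq> {}"
      apply (rule connected_Int_frontier)
      using pP y by (auto simp: connected_segment)
    then obtain z where z: "z \<in> closed_segment p y" "z \<in> frontier P" by blast
    have "z \<in> P" using z closedP frontier_subset_closed by blast
    have "frontier P = rel_frontier P" 
      by (simp add: frontier_def rel_frontier_def ahull rel_interior_interior closedP)
    then obtain S where S: "S facet_of P" "z \<in> S" using z rel_frontier_of_polyhedron[OF polyhedronP] by auto
    then have SF: "S \<in> Fs" by (simp add: Fs_def)
    have zS: "sg S z = 0" using facet_eq[OF SF] S by blast
    obtain u where u: "0 \<le> u" "u \<le> 1" "z = (1 - u) *\<^sub>R p + u *\<^sub>R y" using z(1) by (auto simp: in_segment)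
    have "u \<noteq> 1" using u \<open>z \<in> P\<close> y by auto
    have "sg S z = (1 - u) * sg S p + u * sg S y" 
      unfolding u(3) sg_def by (simp add: inner_add_right algebra_simps)
    moreover have "(1 - u) * sg S p > 0" using interior_sg[OF p SF] u \<open>u\<noteq>1\<close> by simp
    moreover have "u * sg S y \<ge> 0" using y SF u by simp
    ultimately show False using zS by linarith
  qed
qed

end

context sp begin

lemma V_P: "v \<in> V \<Longrightarrow> v \<in> P" unfolding V_def by (simp add: extreme_point_of_def)
lemma finite_I: "finite (I v)" unfolding I_def using finite_Fs by simp
lemma I_Fs: "I v \<subseteq> Fs" unfolding I_def by auto
lemma sg_I: "S \<in> I v \<Longrightarrow> sg S v = 0" unfolding I_def using facet_eq by blast
lemma sg_notI: "v \<in> V \<Longrightarrow> S \<in> Fs \<Longrightarrow> S \<notin> I v \<Longrightarrow> sg S v > 0"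
proof -
  assume "v \<in> V" "S \<in> Fs" "S \<notin> I v"
  then have "sg S v \<noteq> 0" using facet_eq[of S] V_P unfolding I_def by blast
  moreover have "sg S v \<ge> 0" using sg_ge \<open>S \<in> Fs\<close> V_P \<open>v \<in> V\<close> by blast
  ultimately show ?thesis by linarith
qed
lemma card_I: "v \<in> V \<Longrightarrow> card (I v) = DIM('a)"
  using simple unfolding simple_polytope_def V_def I_def Fs_def by auto

lemma sg_add: "sg T (y + t *\<^sub>R w) = sg T y - t * (a T \<bullet> w)"
  unfolding sg_def by (simp add: inner_add_right)

lemma ev_move:
  assumes v: "v \<in> V" and w: "\<forall>T\<in>I v. a T \<bullet> w \<le> 0"
  shows "\<forall>\<^sub>F t in at_right 0. 0 < t \<and> v + t *\<^sub>R w \<in> P \<and> (\<forall>T\<in>Fs - I v. sg T (v + t *\<^sub>R w) > 0)"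
proof -
  have "\<forall>\<^sub>F t in at_right 0. \<forall>T\<in>Fs - I v. sg T (v + t *\<^sub>R w) > 0"
  proof (rule eventually_ball_finite)
    show "finite (Fs - I v)" using finite_Fs by simp
    show "\<forall>T\<in>Fs - I v. \<forall>\<^sub>F t in at_right 0. 0 < sg T (v + t *\<^sub>R w)"
    proof
      fix T assume T: "T \<in> Fs - I v"
      have "((\<lambda>t. sg T v - t * (a T \<bullet> w)) \<longlongrightarrow> sg T v - 0 * (a T \<bullet> w)) (at_right 0)"
        by (intro tendsto_intros)
      then have "((\<lambda>t. sg T (v + t *\<^sub>R w)) \<longlongrightarrow> sg T v) (at_right 0)" by (simp add: sg_add)
      moreover have "sg T v > 0" using sg_notI v T by blast
      ultimately show "\<forall>\<^sub>F t in at_right 0. 0 < sg T (v + t *\<^sub>R w)" by (rule order_tendstoD)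
    qed
  qed
  then have "\<forall>\<^sub>F t in at_right 0. 0 < t \<and> (\<forall>T\<in>Fs - I v. sg T (v + t *\<^sub>R w) > 0)"
    using eventually_at_right_less by (rule eventually_conj[rotated])
  then show ?thesis
  proof (rule eventually_mono)
    fix t assume t: "0 < t \<and> (\<forall>T\<in>Fs - I v. sg T (v + t *\<^sub>R w) > 0)"
    have "\<forall>T\<in>Fs. sg T (v + t *\<^sub>R w) \<ge> 0"
    proof
      fix T assume "T \<in> Fs"
      show "sg T (v + t *\<^sub>R w) \<ge> 0"
      proof (cases "T \<in> I v")
        case True
        then have "sg T v = 0" "a T \<bullet> w \<le> 0" using sg_I w by auto
        then show ?thesis using t by (simp add: sg_add mult_nonneg_nonpos)
      next
        case False then have "sg T (v + t *\<^sub>R w) > 0" using t \<open>T \<in> Fs\<close> by blast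
        then show ?thesis by simp
      qed
    qed
    then show "0 < t \<and> v + t *\<^sub>R w \<in> P \<and> (\<forall>T\<in>Fs - I v. sg T (v + t *\<^sub>R w) > 0)"
      using t P_eq by blast
  qed
qed

lemma ev_happens: "\<forall>\<^sub>F t in at_right (0::real). Q t \<Longrightarrow> \<exists>t. Q t"
  using eventually_happens trivial_limit_at_right_real by blast

lemma perp0: assumes v: "v \<in> V" and w: "\<forall>T\<in>I v. a T \<bullet> w = 0" shows "w = 0"
proof (rule ccontr)
  assume "w \<noteq> 0"
  have e1: "\<forall>\<^sub>F t in at_right 0. (0 < t \<and> v + t *\<^sub>R w \<in> P \<and> (\<forall>T\<in>Fs - I v. sg T (v + t *\<^sub>R w) > 0))"
    using ev_move[OF v] w by simp
  have e2: "\<forall>\<^sub>F t in at_right 0. (0 < t \<and> v + t *\<^sub>R (-w) \<in> P \<and> (\<forall>T\<in>Fs - I v. sg T (v + t *\<^sub>R (-w)) > 0))"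
    using ev_move[OF v, of "-w"] w by simp
  from eventually_conj[OF e1 e2] obtain t where t: "0 < t" "v + t *\<^sub>R w \<in> P" "v + t *\<^sub>R (-w) \<in> P" using ev_happens by blast
  have "midpoint (v + t *\<^sub>R (-w)) (v + t *\<^sub>R w) = v" by (simp add: midpoint_def algebra_simps flip: scaleR_add_left)
  moreover have "v + t *\<^sub>R (-w) \<noteq> v + t *\<^sub>R w"
  proof
    assume "v + t *\<^sub>R (-w) = v + t *\<^sub>R w"
    then have "(2::real) *\<^sub>R (t *\<^sub>R w) = 0" by (metis add_left_imp_eq scaleR_2 scaleR_minus_right add.left_inverse)
    then show False using t \<open>w \<noteq> 0\<close> by simp
  qed
  ultimately have "v \<in> open_segment (v + t *\<^sub>R (-w)) (v + t *\<^sub>R w)"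
    using midpoint_in_open_segment by metis
  then show False using v t unfolding V_def extreme_point_of_def by blast
qed

lemma e_exists: assumes v: "v \<in> V" and S: "S \<in> I v"
  shows "\<exists>w. (\<forall>T\<in>I v - {S}. a T \<bullet> w = 0) \<and> a S \<bullet> w = -1"
proof -
  let ?X = "a ` (I v - {S})"
  have "dim ?X \<le> card ?X" by (rule dim_le_card) (auto intro: span_base simp: finite_I)
  also have "\<dots> \<le> card (I v - {S})" by (rule card_image_le) (simp add: finite_I)
  also have "\<dots> < DIM('a)" using card_I[OF v] S finite_I
    by (metis DIM_positive card_Diff_singleton diff_less zero_less_one)
  finally obtain w0 where w0: "w0 \<noteq> 0" "\<And>y. y \<in> span ?X \<Longrightarrow> orthogonal w0 y"
    using orthogonal_to_subspace_exists by blast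
  have o: "\<forall>T\<in>I v - {S}. a T \<bullet> w0 = 0"
  proof
    fix T assume T: "T \<in> I v - {S}"
    have "a T \<in> span ?X" by (rule span_base) (use T in blast)
    then have "orthogonal w0 (a T)" by (rule w0(2))
    then show "a T \<bullet> w0 = 0" by (simp add: orthogonal_def inner_commute)
  qed
  have "a S \<bullet> w0 \<noteq> 0"
  proof
    assume "a S \<bullet> w0 = 0"
    then have "\<forall>T\<in>I v. a T \<bullet> w0 = 0" using o by auto
    then show False using perp0[OF v] w0 by blast
  qed
  then show ?thesis using o
    by (intro exI[of _ "(- 1 / (a S \<bullet> w0)) *\<^sub>R w0"]) auto
qed

definition "e v S = (SOME w. (\<forall>T\<in>I v - {S}. a T \<bullet> w = 0) \<and> a S \<bullet> w = -1)"

lemma e_prop: assumes "v \<in> V" "S \<in> I v" "T \<in> I v"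
  shows "a T \<bullet> e v S = (if T = S then -1 else 0)"
proof -
  have "(\<forall>T\<in>I v - {S}. a T \<bullet> e v S = 0) \<and> a S \<bullet> e v S = -1"
    unfolding e_def by (rule someI_ex) (rule e_exists[OF assms(1,2)])
  then show ?thesis using assms by auto
qed

lemma coord: assumes v: "v \<in> V" shows "y - v = (\<Sum>S\<in>I v. sg S y *\<^sub>R e v S)"
proof -
  let ?z = "y - v - (\<Sum>S\<in>I v. sg S y *\<^sub>R e v S)"
  have "\<forall>T\<in>I v. a T \<bullet> ?z = 0"
  proof
    fix T assume T: "T \<in> I v"
    have "a T \<bullet> (\<Sum>S\<in>I v. sg S y *\<^sub>R e v S) = (\<Sum>S\<in>I v. sg S y * (if T = S then -1 else 0))"
      by (simp add: inner_sum_right e_prop[OF v _ T])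
    also have "\<dots> = - sg T y" using T finite_I by (simp add: if_distrib[of "(*) _"] cong: if_cong)
    finally have 1: "a T \<bullet> (\<Sum>S\<in>I v. sg S y *\<^sub>R e v S) = - sg T y" .
    have "a T \<bullet> (y - v) = - sg T y" using sg_I[OF T] unfolding sg_def by (simp add: inner_diff_right)
    then show "a T \<bullet> ?z = 0" using 1 by (simp add: inner_diff_right)
  qed
  then have "?z = 0" by (rule perp0[OF v])
  then show ?thesis by simp
qed

lemma phi_diff: assumes v: "v \<in> V" shows "c \<bullet> y - c \<bullet> v = (\<Sum>S\<in>I v. sg S y * (c \<bullet> e v S))"
proof -
  have "c \<bullet> y - c \<bullet> v = c \<bullet> (y - v)" by (simp add: inner_diff_right)
  also have "\<dots> = (\<Sum>S\<in>I v. sg S y * (c \<bullet> e v S))" by (simp add: coord[OF v] inner_sum_right)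
  finally show ?thesis .
qed

end

context sp begin

lemma aw: assumes "v \<in> V" "T \<in> I v" "K \<subseteq> I v"
  shows "a T \<bullet> (\<Sum>S\<in>K. e v S) = (if T \<in> K then -1 else 0)"
proof -
  have "a T \<bullet> (\<Sum>S\<in>K. e v S) = (\<Sum>S\<in>K. (if T = S then -1 else 0))"
    using assms by (auto simp: inner_sum_right e_prop intro!: sum.cong)
  also have "\<dots> = (if T \<in> K then -1 else 0)"
    using finite_subset[OF assms(3) finite_I] by (simp add: sum.delta)
  finally show ?thesis .
qed

lemma point_lemma: assumes v: "v \<in> V" and J: "J \<subseteq> I v"
  shows "\<exists>y\<in>h J. \<forall>T\<in>Fs - J. sg T y > 0"
proof -
  define w where "w = (\<Sum>S\<in>I v - J. e v S)"
  have aw': "\<And>T. T \<in> I v \<Longrightarrow> a T \<bullet> w = (if T \<in> I v - J then -1 else 0)"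
    unfolding w_def using aw[OF v] by blast
  then have "\<forall>T\<in>I v. a T \<bullet> w \<le> 0" by simp
  from ev_happens[OF ev_move[OF v this]] obtain t where
    t: "0 < t" "v + t *\<^sub>R w \<in> P" "\<forall>T\<in>Fs - I v. sg T (v + t *\<^sub>R w) > 0" by blast
  have "v + t *\<^sub>R w \<in> h J"
    unfolding h_def using t(2) J by (auto simp: sg_add sg_I aw')
  moreover have "\<forall>T\<in>Fs - J. sg T (v + t *\<^sub>R w) > 0"
  proof
    fix T assume T: "T \<in> Fs - J"
    show "sg T (v + t *\<^sub>R w) > 0"
    proof (cases "T \<in> I v")
      case True then show ?thesis using T t(1) by (simp add: sg_add sg_I aw')
    next
      case False then show ?thesis using T t(3) by blast
    qed
  qed
  ultimately show ?thesis by blast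
qed

lemma h_sub_S: "S \<in> Fs \<Longrightarrow> S \<in> J \<Longrightarrow> h J \<subseteq> S"
  unfolding h_def using facet_eq by blast

lemma I_h: assumes v: "v \<in> V" and J: "J \<subseteq> I v" shows "{S\<in>Fs. h J \<subseteq> S} = J"
proof
  show "J \<subseteq> {S\<in>Fs. h J \<subseteq> S}" using J I_Fs h_sub_S by blast
  show "{S\<in>Fs. h J \<subseteq> S} \<subseteq> J"
  proof
    fix S assume S: "S \<in> {S\<in>Fs. h J \<subseteq> S}"
    obtain y where y: "y \<in> h J" "\<forall>T\<in>Fs - J. sg T y > 0" using point_lemma[OF v J] by blast
    have "y \<in> S" using S y by blast
    then have "sg S y = 0" using facet_eq S by blast
    then show "S \<in> J" using y S by force
  qed
qed

lemma v_h: "v \<in> V \<Longrightarrow> J \<subseteq> I v \<Longrightarrow> v \<in> h J"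
  unfolding h_def using V_P sg_I by blast

end

context sp begin

lemma h_face: assumes J: "J \<subseteq> Fs" shows "h J face_of P"
proof -
  have fJ: "finite J" using J finite_Fs finite_subset by blast
  have eq: "h J = P \<inter> {x. (\<Sum>S\<in>J. a S) \<bullet> x = (\<Sum>S\<in>J. b S)}"
  proof (intro set_eqI iffI)
    fix y assume y: "y \<in> h J"
    then have yy: "\<forall>S\<in>J. a S \<bullet> y = b S" "y \<in> P" unfolding h_def sg_def by auto
    have "(\<Sum>S\<in>J. a S) \<bullet> y = (\<Sum>S\<in>J. a S \<bullet> y)" by (simp add: inner_sum_left)
    also have "\<dots> = (\<Sum>S\<in>J. b S)" by (rule sum.cong) (use yy in auto)
    finally show "y \<in> P \<inter> {x. (\<Sum>S\<in>J. a S) \<bullet> x = (\<Sum>S\<in>J. b S)}" using yy by blast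
  next
    fix y assume y: "y \<in> P \<inter> {x. (\<Sum>S\<in>J. a S) \<bullet> x = (\<Sum>S\<in>J. b S)}"
    then have "(\<Sum>S\<in>J. sg S y) = 0" unfolding sg_def by (simp add: sum_subtractf inner_sum_left)
    moreover have "\<forall>S\<in>J. sg S y \<ge> 0" using y J sg_ge by blast
    moreover have "(\<Sum>S\<in>J. sg S y) = 0 \<longleftrightarrow> (\<forall>S\<in>J. sg S y = 0)"
      by (rule sum_nonneg_eq_0_iff[OF fJ]) (use calculation in blast)
    ultimately have "\<forall>S\<in>J. sg S y = 0" by simp
    then show "y \<in> h J" using y unfolding h_def by blast
  qed
  have le: "\<And>x. x \<in> P \<Longrightarrow> (\<Sum>S\<in>J. a S) \<bullet> x \<le> (\<Sum>S\<in>J. b S)"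
  proof -
    fix x assume "x \<in> P"
    then have "\<forall>S\<in>J. sg S x \<ge> 0" using J sg_ge by blast
    then have "(\<Sum>S\<in>J. sg S x) \<ge> 0" by (simp add: sum_nonneg)
    then show "(\<Sum>S\<in>J. a S) \<bullet> x \<le> (\<Sum>S\<in>J. b S)" unfolding sg_def by (simp add: sum_subtractf inner_sum_left)
  qed
  have "(P \<inter> {x. (\<Sum>S\<in>J. a S) \<bullet> x = (\<Sum>S\<in>J. b S)}) face_of P"
    by (rule face_of_Int_supporting_hyperplane_le[OF convexP le])
  then show ?thesis by (simp only: eq)
qed

lemma no_facet_P: "S \<in> Fs \<Longrightarrow> \<not> P \<subseteq> S"
proof
  assume S: "S \<in> Fs" "P \<subseteq> S"
  then have f: "S facet_of P" by (simp add: Fs_def)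
  then have "S = P" using S(2) facet_of_imp_subset by blast
  then show False using f by simp
qed

lemma face_h: assumes F: "F face_of P" "F \<noteq> {}" shows "F = h {S\<in>Fs. F \<subseteq> S}"
proof (cases "F = P")
  case True
  then have e: "{S\<in>Fs. F \<subseteq> S} = {}" using no_facet_P by blast
  show ?thesis unfolding e h_def using True by simp
next
  case False
  have eq: "F = \<Inter>{S. S facet_of P \<and> F \<subseteq> S}" using face_of_polyhedron[OF polyhedronP F False] .
  obtain S0 where S0: "S0 facet_of P" "F \<subseteq> S0" using face_of_polyhedron_subset_facet[OF polyhedronP F False] by blast
  show ?thesis
  proof (intro set_eqI iffI)
    fix y assume "y \<in> F"
    then show "y \<in> h {S\<in>Fs. F \<subseteq> S}" unfolding h_def using facet_eq face_of_imp_subset[OF F(1)] by blast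
  next
    fix y assume y: "y \<in> h {S\<in>Fs. F \<subseteq> S}"
    have "y \<in> \<Inter>{S. S facet_of P \<and> F \<subseteq> S}"
    proof
      fix S assume "S \<in> {S. S facet_of P \<and> F \<subseteq> S}"
      then have "S \<in> Fs" "F \<subseteq> S" by (auto simp: Fs_def)
      then show "y \<in> S" using y facet_eq unfolding h_def by blast
    qed
    then show "y \<in> F" using eq by blast
  qed
qed

end

context sp begin

lemma min_vertex: assumes F: "F face_of P" "F \<noteq> {}"
  shows "\<exists>v\<in>F. v \<in> V \<and> (\<forall>y\<in>F. c \<bullet> v \<le> c \<bullet> y)"
proof -
  let ?E = "{x. x extreme_point_of F}"
  have cF: "compact F" "convex F" using F face_of_imp_compact face_of_imp_convex compactP convexP by blast+
  have Fe: "F = convex hull ?E" using Krein_Milman_Minkowski[OF cF] .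
  have EV: "?E \<subseteq> V \<inter> F" using extreme_point_of_face[OF F(1)] unfolding V_def by blast
  then have fE: "finite ?E" using finite_V finite_subset by blast
  have neE: "?E \<noteq> {}" using Fe F(2) by auto
  define m where "m = Min ((\<lambda>u. c \<bullet> u) ` ?E)"
  have "m \<in> (\<lambda>u. c \<bullet> u) ` ?E" unfolding m_def using fE neE by (intro Min_in) auto
  then obtain v where v: "v \<in> ?E" "c \<bullet> v = m" by blast
  have "?E \<subseteq> {y. c \<bullet> y \<ge> m}" unfolding m_def using fE by auto
  then have "convex hull ?E \<subseteq> {y. c \<bullet> y \<ge> m}" 
    by (intro hull_minimal) (auto simp: convex_halfspace_ge)
  then show ?thesis using v EV Fe by blast
qed

lemma inj_e: assumes v: "v \<in> V" shows "inj_on (e v) (I v)"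
proof
  fix S S' assume S: "S \<in> I v" "S' \<in> I v" "e v S = e v S'"
  then have "a S \<bullet> e v S = a S \<bullet> e v S'" by simp
  moreover have "a S \<bullet> e v S = -1" using e_prop[OF v S(1) S(1)] by simp
  moreover have "S \<noteq> S' \<Longrightarrow> a S \<bullet> e v S' = 0" using e_prop[OF v S(2) S(1)] by simp
  ultimately show "S = S'" by force
qed

lemma indep_e: assumes v: "v \<in> V" and K: "K \<subseteq> I v" shows "independent (e v ` K)"
proof (rule independent_if_scalars_zero)
  have fK: "finite K" using K finite_I finite_subset by blast
  then show "finite (e v ` K)" by simp
  fix f x assume f: "(\<Sum>x\<in>e v ` K. f x *\<^sub>R x) = 0" and x: "x \<in> e v ` K"
  then obtain S where S: "S \<in> K" "x = e v S" by blast
  have ie: "inj_on (e v) K" using inj_e[OF v] K inj_on_subset by blast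
  have "(\<Sum>S'\<in>K. f (e v S') *\<^sub>R e v S') = 0" using f by (simp add: sum.reindex[OF ie])
  then have "a S \<bullet> (\<Sum>S'\<in>K. f (e v S') *\<^sub>R e v S') = 0" by simp
  moreover have "a S \<bullet> (\<Sum>S'\<in>K. f (e v S') *\<^sub>R e v S') = (\<Sum>S'\<in>K. f (e v S') * (if S = S' then -1 else 0))"
  proof -
    have ee: "\<And>S'. S' \<in> K \<Longrightarrow> a S \<bullet> e v S' = (if S = S' then -1 else 0)"
      using e_prop[OF v] K S(1) by blast
    have "a S \<bullet> (\<Sum>S'\<in>K. f (e v S') *\<^sub>R e v S') = (\<Sum>S'\<in>K. f (e v S') * (a S \<bullet> e v S'))"
      by (simp add: inner_sum_right)
    also have "\<dots> = (\<Sum>S'\<in>K. f (e v S') * (if S = S' then -1 else 0))"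
      by (rule sum.cong) (simp_all add: ee)
    finally show ?thesis .
  qed
  moreover have "\<dots> = - f (e v S)" using S fK by (simp add: if_distrib[of "(*) _"] cong: if_cong)
  ultimately show "f x = 0" using S by simp
qed

lemma aff_dim_h: assumes v: "v \<in> V" and J: "J \<subseteq> I v"
  shows "aff_dim (h J) = int DIM('a) - int (card J)"
proof -
  define K where "K = I v - J"
  let ?T = "(+) (- v) ` h J"
  have vh: "v \<in> h J" using v_h[OF v J] .
  have "aff_dim (h J) = int (dim ?T)" by (rule aff_dim_eq_dim) (rule hull_inc[OF vh])
  moreover have "span ?T = span (e v ` K)"
  proof (rule span_eq[THEN iffD2], rule conjI)
    show "?T \<subseteq> span (e v ` K)"
    proof
      fix z assume "z \<in> ?T"
      then obtain y where y: "y \<in> h J" "z = y - v" by auto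
      have "z = (\<Sum>S\<in>I v. sg S y *\<^sub>R e v S)" using coord[OF v] y by simp
      also have "\<dots> \<in> span (e v ` K)"
      proof (rule span_sum)
        fix S assume S: "S \<in> I v"
        show "sg S y *\<^sub>R e v S \<in> span (e v ` K)"
        proof (cases "S \<in> J")
          case True then have "sg S y = 0" using y unfolding h_def by blast
          then show ?thesis by (simp add: span_zero)
        next
          case False then show ?thesis using S unfolding K_def by (intro span_scale span_base) blast
        qed
      qed
      finally show "z \<in> span (e v ` K)" .
    qed
    show "e v ` K \<subseteq> span ?T"
    proof
      fix x assume "x \<in> e v ` K"
      then obtain S where S: "S \<in> K" "x = e v S" by blast
      have SI: "S \<in> I v" "S \<notin> J" using S unfolding K_def by auto
      have "\<forall>T\<in>I v. a T \<bullet> e v S \<le> 0" using e_prop[OF v SI(1)] by simp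
      from ev_happens[OF ev_move[OF v this]] obtain t where
        t: "0 < t" "v + t *\<^sub>R e v S \<in> P" by blast
      have "v + t *\<^sub>R e v S \<in> h J" unfolding h_def using t J SI
        by (auto simp: sg_add sg_I e_prop[OF v SI(1)])
      then have "t *\<^sub>R e v S \<in> ?T" by force
      then have "(1/t) *\<^sub>R (t *\<^sub>R e v S) \<in> span ?T" by (intro span_scale span_base)
      then show "x \<in> span ?T" using t S by simp
    qed
  qed
  then have "dim ?T = dim (e v ` K)" by (metis dim_span)
  moreover have "dim (e v ` K) = card (e v ` K)" by (rule dim_eq_card_independent) (rule indep_e[OF v], simp add: K_def)
  moreover have "card (e v ` K) = card K" 
    by (rule card_image) (rule inj_on_subset[OF inj_e[OF v]], simp add: K_def)
  moreover have "card K = card (I v) - card J" unfolding K_def using J finite_I by (simp add: card_Diff_subset finite_subset)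
  moreover have "card J \<le> card (I v)" using J finite_I by (simp add: card_mono)
  ultimately show ?thesis using card_I[OF v] by simp
qed

end

context sp begin

definition "C J = {y. \<forall>S\<in>J. sg S y \<ge> 0}"
definition "H S = {y. sg S y = 0}"
definition "ff q x S = (if sg S x < 0 then 0 else if sg S x = 0 then q S else (1::complex))"

lemma sg_affine: "sg S (y + r *\<^sub>R (x - y)) = sg S y + r * (sg S x - sg S y)"
  unfolding sg_def by (simp add: inner_add_right inner_diff_right algebra_simps)

lemma ev_pos: assumes "finite X" "\<forall>T\<in>X. sg T y > 0"
  shows "\<forall>\<^sub>F t in at_right 0. \<forall>T\<in>X. sg T (y + t *\<^sub>R w) > 0"
proof (rule eventually_ball_finite[OF assms(1)], rule ballI)
  fix T assume T: "T \<in> X"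
  have "((\<lambda>t. sg T y - t * (a T \<bullet> w)) \<longlongrightarrow> sg T y - 0 * (a T \<bullet> w)) (at_right 0)"
    by (intro tendsto_intros)
  then have "((\<lambda>t. sg T (y + t *\<^sub>R w)) \<longlongrightarrow> sg T y) (at_right 0)" by (simp add: sg_add)
  moreover have "sg T y > 0" using assms T by blast
  ultimately show "\<forall>\<^sub>F t in at_right 0. 0 < sg T (y + t *\<^sub>R w)" by (rule order_tendstoD)
qed

lemma tc: assumes v: "v \<in> V" and J: "J \<subseteq> I v" shows "tangent_cone P (h J) = C J"
proof
  show "tangent_cone P (h J) \<subseteq> C J"
  proof
    fix z assume "z \<in> tangent_cone P (h J)"
    then obtain r y x where z: "z = y + r *\<^sub>R (x - y)" "r \<ge> 0" "y \<in> h J" "x \<in> P"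
      unfolding tangent_cone_def by blast
    have "\<forall>S\<in>J. sg S z \<ge> 0"
    proof
      fix S assume S: "S \<in> J"
      then have "sg S y = 0" using z(3) unfolding h_def by blast
      moreover have "sg S x \<ge> 0" using sg_ge z(4) S J I_Fs by blast
      ultimately show "sg S z \<ge> 0" using z(1,2) by (simp add: sg_affine)
    qed
    then show "z \<in> C J" unfolding C_def by blast
  qed
  show "C J \<subseteq> tangent_cone P (h J)"
  proof
    fix z assume z: "z \<in> C J"
    obtain y where y: "y \<in> h J" "\<forall>T\<in>Fs - J. sg T y > 0" using point_lemma[OF v J] by blast
    have "\<forall>\<^sub>F t in at_right 0. 0 < t \<and> (\<forall>T\<in>Fs - J. sg T (y + t *\<^sub>R (z - y)) > 0)"
      using eventually_at_right_less ev_pos[OF _ y(2)] finite_Fs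
      by (intro eventually_conj) auto
    then obtain t where t: "0 < t" "\<forall>T\<in>Fs - J. sg T (y + t *\<^sub>R (z - y)) > 0"
      using ev_happens by blast
    have "\<forall>T\<in>Fs. sg T (y + t *\<^sub>R (z - y)) \<ge> 0"
    proof
      fix T assume T: "T \<in> Fs"
      show "sg T (y + t *\<^sub>R (z - y)) \<ge> 0"
      proof (cases "T \<in> J")
        case True
        then have "sg T y = 0" "sg T z \<ge> 0" using y z unfolding h_def C_def by auto
        then show ?thesis using t by (simp add: sg_affine)
      next
        case False then have "sg T (y + t *\<^sub>R (z - y)) > 0" using t T by blast
        then show ?thesis by simp
      qed
    qed
    then have xP: "y + t *\<^sub>R (z - y) \<in> P" using P_eq by blast
    have "z = y + (1/t) *\<^sub>R ((y + t *\<^sub>R (z - y)) - y)" using t by simp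
    then show "z \<in> tangent_cone P (h J)"
      unfolding tangent_cone_def using xP y(1) t(1)
      by (intro CollectI exI[of _ "1/t"] exI[of _ y] exI[of _ "y + t *\<^sub>R (z - y)"]) simp
  qed
qed

lemma ahull_facet: assumes S: "S \<in> Fs" shows "affine hull S = H S"
proof -
  have HS: "H S = {x. a S \<bullet> x = b S}" unfolding H_def sg_def by auto
  have sub: "S \<subseteq> H S" using facet_eq[OF S] unfolding H_def by blast
  have fS: "S facet_of P" using S Fs_def by simp
  show ?thesis
  proof (rule affine_dim_equal)
    show "affine (affine hull S)" by simp
    show "affine (H S)" unfolding HS by (rule affine_hyperplane)
    show "affine hull S \<noteq> {}" using fS facet_of_def by auto
    show "affine hull S \<subseteq> H S" using sub \<open>affine (H S)\<close> by (simp add: hull_minimal)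
    have "aff_dim (affine hull S) = aff_dim P - 1" using fS unfolding facet_of_def by simp
    also have "\<dots> = aff_dim (H S)" unfolding HS using a_nz[OF S] full by simp
    finally show "aff_dim (affine hull S) = aff_dim (H S)" .
  qed
qed

lemma cone_facets: assumes v: "v \<in> V" and J: "J \<subseteq> I v"
  shows "T facet_of C J \<longleftrightarrow> (\<exists>S\<in>J. T = C J \<inter> H S)"
proof -
  define hs where "hs S = {x. a S \<bullet> x \<le> b S}" for S
  define F where "F = hs ` J"
  define sel where "sel hh = (SOME S. S \<in> J \<and> hh = hs S)" for hh
  have sel: "\<And>hh. hh \<in> F \<Longrightarrow> sel hh \<in> J \<and> hh = hs (sel hh)"
    unfolding F_def sel_def by (rule someI_ex) blast
  have JF: "J \<subseteq> Fs" using J I_Fs by blast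
  have fF: "finite F" unfolding F_def using finite_subset[OF JF finite_Fs] by simp
  have CF: "C J = \<Inter>F" unfolding C_def F_def hs_def sg_def by auto
  have ahC: "affine hull (C J) = UNIV"
  proof -
    have "P \<subseteq> C J" unfolding C_def using sg_ge JF by blast
    then have "affine hull P \<subseteq> affine hull (C J)" by (rule hull_mono)
    then show ?thesis using ahull by blast
  qed
  have seq: "C J = affine hull (C J) \<inter> \<Inter>F" using CF ahC by simp
  have faceq: "\<And>hh. hh \<in> F \<Longrightarrow> a (sel hh) \<noteq> 0 \<and> hh = {x. a (sel hh) \<bullet> x \<le> b (sel hh)}"
    using sel a_nz JF unfolding hs_def by blast
  have psub: "\<And>F'. F' \<subset> F \<Longrightarrow> C J \<subset> affine hull (C J) \<inter> \<Inter>F'"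
  proof -
    fix F' assume F': "F' \<subset> F"
    then obtain hh where hh: "hh \<in> F" "hh \<notin> F'" by blast
    define S where "S = sel hh"
    have S: "S \<in> J" "hh = hs S" using sel[OF hh(1)] S_def by auto
    have SI: "S \<in> I v" using S J by blast
    let ?p = "v - e v S"
    have "sg S ?p = -1" using e_prop[OF v SI SI] sg_I[OF SI] unfolding sg_def by (simp add: inner_diff_right)
    then have "?p \<notin> C J" using S unfolding C_def by force
    moreover have "?p \<in> \<Inter>F'"
    proof
      fix h' assume h': "h' \<in> F'"
      then have h'F: "h' \<in> F" using F' by blast
      define S' where "S' = sel h'"
      have S': "S' \<in> J" "h' = hs S'" using sel[OF h'F] S'_def by auto
      have "S' \<noteq> S" using S S' hh h' by auto
      have S'I: "S' \<in> I v" using S' J by blast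
      have "a S' \<bullet> e v S = (if S' = S then -1 else 0)" by (rule e_prop[OF v SI S'I])
      then have "a S' \<bullet> e v S = 0" using \<open>S' \<noteq> S\<close> by simp
      moreover have "a S' \<bullet> v = b S'" using sg_I[of S' v] S' J unfolding sg_def by auto
      ultimately show "?p \<in> h'" using S' unfolding hs_def by (simp add: inner_diff_right)
    qed
    moreover have "C J \<subseteq> \<Inter>F'" using CF F' by blast
    ultimately show "C J \<subset> affine hull (C J) \<inter> \<Inter>F'" using ahC by blast
  qed
  have "T facet_of C J \<longleftrightarrow> (\<exists>hh. hh \<in> F \<and> T = C J \<inter> {x. a (sel hh) \<bullet> x = b (sel hh)})"
    by (rule facet_of_polyhedron_explicit[OF fF seq faceq psub])
  also have "\<dots> \<longleftrightarrow> (\<exists>S\<in>J. T = C J \<inter> H S)"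
  proof
    assume "\<exists>hh. hh \<in> F \<and> T = C J \<inter> {x. a (sel hh) \<bullet> x = b (sel hh)}"
    then obtain hh where "hh \<in> F" "T = C J \<inter> {x. a (sel hh) \<bullet> x = b (sel hh)}" by blast
    moreover have "{x. a (sel hh) \<bullet> x = b (sel hh)} = H (sel hh)" unfolding H_def sg_def by auto
    ultimately show "\<exists>S\<in>J. T = C J \<inter> H S" using sel by metis
  next
    assume "\<exists>S\<in>J. T = C J \<inter> H S"
    then obtain S where S: "S \<in> J" "T = C J \<inter> H S" by blast
    then have hF: "hs S \<in> F" unfolding F_def by blast
    have "sel (hs S) = S"
    proof (rule ccontr)
      let ?S1 = "sel (hs S)"
      assume ne: "?S1 \<noteq> S"
      have S1: "?S1 \<in> J" "hs ?S1 = hs S" using sel[OF hF] by auto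
      have S1I: "?S1 \<in> I v" and SI: "S \<in> I v" using S1 S J by auto
      let ?p = "v - e v ?S1"
      have "a ?S1 \<bullet> e v ?S1 = -1" using e_prop[OF v S1I S1I] by simp
      moreover have "a ?S1 \<bullet> v = b ?S1" using sg_I[OF S1I] unfolding sg_def by simp
      ultimately have "?p \<notin> hs ?S1" unfolding hs_def by (simp add: inner_diff_right)
      have "a S \<bullet> e v ?S1 = (if S = ?S1 then -1 else 0)" by (rule e_prop[OF v S1I SI])
      then have "a S \<bullet> e v ?S1 = 0" using ne by simp
      moreover have "a S \<bullet> v = b S" using sg_I[OF SI] unfolding sg_def by simp
      ultimately have "?p \<in> hs S" unfolding hs_def by (simp add: inner_diff_right)
      then show False using S1(2) \<open>?p \<notin> hs ?S1\<close> by simp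
    qed
    then have "C J \<inter> H (sel (hs S)) = C J \<inter> H S" by simp
    moreover have "{x. a (sel (hs S)) \<bullet> x = b (sel (hs S))} = H (sel (hs S))" unfolding H_def sg_def by auto
    ultimately show "\<exists>hh. hh \<in> F \<and> T = C J \<inter> {x. a (sel hh) \<bullet> x = b (sel hh)}"
      using hF S by metis
  qed
  finally show ?thesis .
qed

end

context sp begin

lemma cone_facet_inj: assumes v: "v \<in> V" and J: "J \<subseteq> I v" and S: "S \<in> J" "S' \<in> J"
  and eq: "C J \<inter> H S = C J \<inter> H S'" shows "S = S'"
proof (rule ccontr)
  assume ne: "S \<noteq> S'"
  have S'I: "S' \<in> I v" using S J by blast
  let ?p = "v + e v S'"
  have sgp: "\<And>T. T \<in> J \<Longrightarrow> sg T ?p = (if T = S' then 1 else 0)"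
  proof -
    fix T assume T: "T \<in> J"
    then have TI: "T \<in> I v" using J by blast
    have "a T \<bullet> e v S' = (if T = S' then -1 else 0)" by (rule e_prop[OF v S'I TI])
    then show "sg T ?p = (if T = S' then 1 else 0)" using sg_I[OF TI] unfolding sg_def
      by (simp add: inner_add_right)
  qed
  have "?p \<in> C J" unfolding C_def using sgp by simp
  moreover have "?p \<in> H S" unfolding H_def using sgp[OF S(1)] ne by simp
  moreover have "?p \<notin> H S'" unfolding H_def using sgp[OF S(2)] by simp
  ultimately show False using eq by blast
qed

lemma cone_weight_eq: assumes v: "v \<in> V" and J: "J \<subseteq> I v" and S: "S \<in> J"
  shows "cone_weight P (h J) q (C J \<inter> H S) = q S"
proof -
  have JF: "J \<subseteq> Fs" using J I_Fs by blast
  have "(THE S'. S' facet_of P \<and> h J \<subseteq> S' \<and> C J \<inter> H S = tangent_cone P (h J) \<inter> affine hull S') = S"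
  proof (rule the_equality)
    show "S facet_of P \<and> h J \<subseteq> S \<and> C J \<inter> H S = tangent_cone P (h J) \<inter> affine hull S"
      using S JF h_sub_S[of S J] tc[OF v J] ahull_facet[of S] by (auto simp: Fs_def)
  next
    fix S' assume S': "S' facet_of P \<and> h J \<subseteq> S' \<and> C J \<inter> H S = tangent_cone P (h J) \<inter> affine hull S'"
    then have S'F: "S' \<in> Fs" by (simp add: Fs_def)
    then have "S' \<in> J" using S' I_h[OF v J] by blast
    moreover have "C J \<inter> H S = C J \<inter> H S'" using S' tc[OF v J] ahull_facet[OF S'F] by simp
    ultimately show "S' = S" using cone_facet_inj[OF v J S] by blast
  qed
  then show ?thesis unfolding cone_weight_def by simp
qed

lemma prod_ff: assumes fin: "finite J" and nn: "\<forall>S\<in>J. sg S x \<ge> 0"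
  shows "(\<Prod>S\<in>J. ff q x S) = (\<Prod>S\<in>{S\<in>J. sg S x = 0}. q S)"
proof -
  have "(\<Prod>S\<in>{S\<in>J. sg S x = 0}. q S) = (\<Prod>S\<in>J. if sg S x = 0 then q S else 1)"
    by (rule prod.inter_filter[OF fin])
  also have "\<dots> = (\<Prod>S\<in>J. ff q x S)" 
    by (rule prod.cong) (use nn in \<open>auto simp: ff_def\<close>)
  finally show ?thesis by simp
qed

lemma prod_ff_zero: assumes fin: "finite J" and S: "S \<in> J" "sg S x < 0"
  shows "(\<Prod>S\<in>J. ff q x S) = 0"
proof -
  have "ff q x S = 0" using S by (simp add: ff_def)
  then show ?thesis using fin S(1) by (simp add: prod_zero_iff) blast
qed

lemma wchar_cone: assumes v: "v \<in> V" and J: "J \<subseteq> I v"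
  shows "wchar (tangent_cone P (h J)) (cone_weight P (h J) q) x = (\<Prod>S\<in>J. ff q x S)"
proof -
  have fJ: "finite J" using J finite_I finite_subset by blast
  show ?thesis
  proof (cases "x \<in> C J")
    case False
    then obtain S where "S \<in> J" "sg S x < 0" unfolding C_def by force
    then show ?thesis using False prod_ff_zero[OF fJ] tc[OF v J] unfolding wchar_def by simp
  next
    case True
    then have nn: "\<forall>S\<in>J. sg S x \<ge> 0" unfolding C_def by blast
    have set: "{T. T facet_of C J \<and> x \<in> T} = (\<lambda>S. C J \<inter> H S) ` {S\<in>J. sg S x = 0}"
      using cone_facets[OF v J] True unfolding H_def by auto
    have inj: "inj_on (\<lambda>S. C J \<inter> H S) {S\<in>J. sg S x = 0}"
      by (rule inj_onI) (use cone_facet_inj[OF v J] in blast)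
    have "wchar (tangent_cone P (h J)) (cone_weight P (h J) q) x
        = (\<Prod>T\<in>{T. T facet_of C J \<and> x \<in> T}. cone_weight P (h J) q T)"
      using True tc[OF v J] unfolding wchar_def by simp
    also have "\<dots> = (\<Prod>S\<in>{S\<in>J. sg S x = 0}. cone_weight P (h J) q (C J \<inter> H S))"
      unfolding set by (rule prod.reindex[OF inj, unfolded comp_def])
    also have "\<dots> = (\<Prod>S\<in>{S\<in>J. sg S x = 0}. q S)"
      by (rule prod.cong) (use cone_weight_eq[OF v J] in auto)
    also have "\<dots> = (\<Prod>S\<in>J. ff q x S)" using prod_ff[OF fJ nn] by simp
    finally show ?thesis .
  qed
qed

lemma wchar_P: "wchar P q x = (\<Prod>S\<in>Fs. ff q x S)"
proof (cases "x \<in> P")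
  case False
  then obtain S where "S \<in> Fs" "sg S x < 0" using P_eq by force
  then show ?thesis using False prod_ff_zero[OF finite_Fs] unfolding wchar_def by simp
next
  case True
  then have nn: "\<forall>S\<in>Fs. sg S x \<ge> 0" using sg_ge by blast
  have set: "{T. T facet_of P \<and> x \<in> T} = {S\<in>Fs. sg S x = 0}"
    using facet_eq True unfolding Fs_def by auto
  show ?thesis using True prod_ff[OF finite_Fs nn] unfolding wchar_def set by simp
qed

end

context sp begin

definition "gen c \<longleftrightarrow> (\<forall>v\<in>V. \<forall>S\<in>I v. c \<bullet> e v S \<noteq> 0)"
definition "Dn c v = {S\<in>I v. c \<bullet> e v S < 0}"
definition "Up c v = {S\<in>I v. c \<bullet> e v S > 0}"

lemma DU: "gen c \<Longrightarrow> v \<in> V \<Longrightarrow> Dn c v \<union> Up c v = I v"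
  unfolding gen_def Dn_def Up_def by (auto simp: less_linear) (meson linorder_neqE_linordered_idom)
lemma DU_disj: "Dn c v \<inter> Up c v = {}" unfolding Dn_def Up_def by auto
lemma Dn_neg: "Dn (-c) v = Up c v" unfolding Dn_def Up_def by auto
lemma Up_neg: "Up (-c) v = Dn c v" unfolding Dn_def Up_def by auto
lemma gen_neg: "gen (-c) = gen c" unfolding gen_def by auto
lemma Dn_I: "Dn c v \<subseteq> I v" unfolding Dn_def by auto
lemma Up_I: "Up c v \<subseteq> I v" unfolding Up_def by auto

lemma strict_min: assumes g: "gen c" and v: "v \<in> V" and J: "J \<subseteq> I v" and D: "Dn c v \<subseteq> J"
  and y: "y \<in> h J" "y \<noteq> v" shows "c \<bullet> v < c \<bullet> y"
proof -
  have yP: "y \<in> P" using y unfolding h_def by blast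
  have terms: "\<forall>S\<in>I v. sg S y * (c \<bullet> e v S) \<ge> 0"
  proof
    fix S assume S: "S \<in> I v"
    show "sg S y * (c \<bullet> e v S) \<ge> 0"
    proof (cases "S \<in> J")
      case True then show ?thesis using y unfolding h_def by simp
    next
      case False
      then have "c \<bullet> e v S > 0" using D S g v unfolding Dn_def gen_def by force
      moreover have "sg S y \<ge> 0" using sg_ge yP S I_Fs by blast
      ultimately show ?thesis by simp
    qed
  qed
  have diff: "c \<bullet> y - c \<bullet> v = (\<Sum>S\<in>I v. sg S y * (c \<bullet> e v S))" by (rule phi_diff[OF v])
  have "c \<bullet> y - c \<bullet> v \<noteq> 0"
  proof
    assume "c \<bullet> y - c \<bullet> v = 0"
    then have "(\<Sum>S\<in>I v. sg S y * (c \<bullet> e v S)) = 0" using diff by simp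
    moreover have "(\<Sum>S\<in>I v. sg S y * (c \<bullet> e v S)) = 0 \<longleftrightarrow> (\<forall>S\<in>I v. sg S y * (c \<bullet> e v S) = 0)"
      by (rule sum_nonneg_eq_0_iff[OF finite_I]) (use terms in blast)
    ultimately have "\<forall>S\<in>I v. sg S y * (c \<bullet> e v S) = 0" by simp
    then have "\<forall>S\<in>I v. sg S y = 0" using g v unfolding gen_def by simp
    then have "y - v = 0" using coord[OF v, of y] by simp
    then show False using y by simp
  qed
  moreover have "c \<bullet> y - c \<bullet> v \<ge> 0" using diff terms by (simp add: sum_nonneg)
  ultimately show ?thesis by simp
qed

lemma min_Dn: assumes v: "v \<in> V" and J: "J \<subseteq> I v" and m: "\<forall>y\<in>h J. c \<bullet> v \<le> c \<bullet> y"
  shows "Dn c v \<subseteq> J"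
proof
  fix S assume S: "S \<in> Dn c v"
  show "S \<in> J"
  proof (rule ccontr)
    assume nJ: "S \<notin> J"
    have SI: "S \<in> I v" using S Dn_I by blast
    have "\<forall>T\<in>I v. a T \<bullet> e v S \<le> 0" using e_prop[OF v SI] by simp
    from ev_happens[OF ev_move[OF v this]] obtain t where
      t: "0 < t" "v + t *\<^sub>R e v S \<in> P" by blast
    have "\<forall>T\<in>J. sg T (v + t *\<^sub>R e v S) = 0"
    proof
      fix T assume T: "T \<in> J"
      then have TI: "T \<in> I v" using J by blast
      have "a T \<bullet> e v S = (if T = S then -1 else 0)" by (rule e_prop[OF v SI TI])
      then show "sg T (v + t *\<^sub>R e v S) = 0" using T nJ sg_I[OF TI] by (auto simp: sg_add)
    qed
    then have "v + t *\<^sub>R e v S \<in> h J" using t unfolding h_def by blast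
    then have "c \<bullet> v \<le> c \<bullet> (v + t *\<^sub>R e v S)" using m by blast
    moreover have "c \<bullet> e v S < 0" using S unfolding Dn_def by blast
    moreover have "t * (c \<bullet> e v S) < 0" using t(1) calculation(2) by (rule mult_pos_neg)
    ultimately show False by (simp add: inner_add_right)
  qed
qed

lemma face_sum: assumes g: "gen c"
  shows "(\<Sum>F\<in>{F. F face_of P \<and> F \<noteq> {}}. G F) = (\<Sum>v\<in>V. \<Sum>J\<in>{J. Dn c v \<subseteq> J \<and> J \<subseteq> I v}. G (h J))"
proof -
  let ?Pairs = "SIGMA v:V. {J. Dn c v \<subseteq> J \<and> J \<subseteq> I v}"
  have fin: "\<forall>v\<in>V. finite {J. Dn c v \<subseteq> J \<and> J \<subseteq> I v}"
    using finite_I by (auto intro: finite_subset[of _ "Pow (I v)" for v])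
  have bij: "bij_betw (\<lambda>(v, J). h J) ?Pairs {F. F face_of P \<and> F \<noteq> {}}"
  proof (rule bij_betwI')
    fix p1 p2 assume p: "p1 \<in> ?Pairs" "p2 \<in> ?Pairs"
    obtain v J v' J' where pp: "p1 = (v, J)" "p2 = (v', J')" by force
    have vJ: "v \<in> V" "Dn c v \<subseteq> J" "J \<subseteq> I v" "v' \<in> V" "Dn c v' \<subseteq> J'" "J' \<subseteq> I v'" using p pp by auto
    show "((case p1 of (v, J) \<Rightarrow> h J) = (case p2 of (v, J) \<Rightarrow> h J)) = (p1 = p2)"
    proof
      assume "(case p1 of (v, J) \<Rightarrow> h J) = (case p2 of (v, J) \<Rightarrow> h J)"
      then have hh: "h J = h J'" using pp by simp
      have "J = J'" using I_h[of v J] I_h[of v' J'] vJ hh by metis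
      moreover have "v = v'"
      proof (rule ccontr)
        assume ne: "v \<noteq> v'"
        have "v' \<in> h J" using hh v_h vJ by blast
        then have "c \<bullet> v < c \<bullet> v'" using strict_min[OF g vJ(1,3,2)] ne by blast
        moreover have "v \<in> h J'" using hh v_h vJ by blast
        then have "c \<bullet> v' < c \<bullet> v" using strict_min[OF g vJ(4,6,5)] ne by blast
        ultimately show False by simp
      qed
      ultimately show "p1 = p2" using pp by simp
    qed simp
  next
    fix p assume p: "p \<in> ?Pairs"
    obtain v J where pp: "p = (v, J)" by force
    have vJ: "v \<in> V" "J \<subseteq> I v" using p pp by auto
    have "h J face_of P" using h_face vJ I_Fs by blast
    moreover have "h J \<noteq> {}" using v_h[OF vJ] by blast
    ultimately show "(case p of (v, J) \<Rightarrow> h J) \<in> {F. F face_of P \<and> F \<noteq> {}}" using pp by simp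
  next
    fix F assume "F \<in> {F. F face_of P \<and> F \<noteq> {}}"
    then have F: "F face_of P" "F \<noteq> {}" by auto
    obtain v where v: "v \<in> F" "v \<in> V" "\<forall>y\<in>F. c \<bullet> v \<le> c \<bullet> y" using min_vertex[OF F] by blast
    define J where "J = {S\<in>Fs. F \<subseteq> S}"
    have FJ: "F = h J" unfolding J_def by (rule face_h[OF F])
    have JI: "J \<subseteq> I v" unfolding J_def I_def using v(1) by blast
    have m: "\<forall>y\<in>h J. c \<bullet> v \<le> c \<bullet> y" using v(3) unfolding FJ[symmetric] .
    have DJ: "Dn c v \<subseteq> J" by (fact min_Dn[OF v(2) JI m])
    have "(v, J) \<in> ?Pairs" using v(2) DJ JI by (simp only: mem_Sigma_iff mem_Collect_eq)
    moreover have "F = (case (v, J) of (v, J) \<Rightarrow> h J)" using FJ by (simp only: prod.case)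
    ultimately show "\<exists>p\<in>?Pairs. F = (case p of (v, J) \<Rightarrow> h J)" by (rule bexI[rotated])
  qed
  have "(\<Sum>F\<in>{F. F face_of P \<and> F \<noteq> {}}. G F) = (\<Sum>p\<in>?Pairs. G ((\<lambda>(v, J). h J) p))"
    by (rule sum.reindex_bij_betw[OF bij, symmetric])
  also have "\<dots> = (\<Sum>v\<in>V. \<Sum>J\<in>{J. Dn c v \<subseteq> J \<and> J \<subseteq> I v}. G (h J))"
    by (subst sum.Sigma[OF finite_V fin]) (simp add: case_prod_unfold)
  finally show ?thesis .
qed

lemma vertex_term: assumes g: "gen c" and v: "v \<in> V"
  shows "(\<Sum>J\<in>{J. Dn c v \<subseteq> J \<and> J \<subseteq> I v}. (-1) ^ nat (aff_dim (h J)) * (\<Prod>S\<in>J. ff q x S))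
       = (\<Prod>S\<in>Dn c v. ff q x S) * (\<Prod>S\<in>Up c v. ff q x S - 1)"
proof -
  let ?D = "Dn c v" and ?U = "Up c v"
  have fD: "finite ?D" by (rule finite_subset[OF Dn_I finite_I])
  have fU: "finite ?U" by (rule finite_subset[OF Up_I finite_I])
  have "card (I v) = card (?D \<union> ?U)" by (simp only: DU[OF g v])
  also have "\<dots> = card ?D + card ?U" by (rule card_Un_disjoint[OF fD fU DU_disj])
  finally have cardI: "card (I v) = card ?D + card ?U" .
  have "(\<Sum>K\<in>Pow ?U. (\<Prod>S\<in>?D. ff q x S) * ((\<Prod>S\<in>K. ff q x S) * (\<Prod>S\<in>?U - K. - 1)))
     = (\<Sum>J\<in>{J. ?D \<subseteq> J \<and> J \<subseteq> I v}. (-1) ^ nat (aff_dim (h J)) * (\<Prod>S\<in>J. ff q x S))"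
  proof (rule sum.reindex_bij_witness[of _ "\<lambda>J. J - ?D" "\<lambda>K. ?D \<union> K"])
    fix K assume K: "K \<in> Pow ?U"
    then show "?D \<union> K - ?D = K" using DU_disj by blast
    show "?D \<union> K \<in> {J. ?D \<subseteq> J \<and> J \<subseteq> I v}" using K Dn_I Up_I by blast
    have fK: "finite K" using K fU finite_subset by blast
    have dj: "?D \<inter> K = {}" using K DU_disj by blast
    have ck: "card (?D \<union> K) = card ?D + card K" using card_Un_disjoint[OF fD fK dj] .
    have cK: "card K \<le> card ?U" using K fU card_mono by blast
    have "aff_dim (h (?D \<union> K)) = int DIM('a) - int (card (?D \<union> K))"
      by (rule aff_dim_h[OF v]) (use K Dn_I Up_I in blast)
    then have "nat (aff_dim (h (?D \<union> K))) = card (?U - K)"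
      using ck cK cardI card_I[OF v] card_Diff_subset[OF fK] K by auto
    moreover have "(\<Prod>S\<in>?D \<union> K. ff q x S) = (\<Prod>S\<in>?D. ff q x S) * (\<Prod>S\<in>K. ff q x S)"
      by (rule prod.union_disjoint[OF fD fK dj])
    moreover have "(\<Prod>S\<in>?U - K. (- 1::complex)) = (-1) ^ card (?U - K)" by simp
    ultimately show "(-1) ^ nat (aff_dim (h (?D \<union> K))) * (\<Prod>S\<in>?D \<union> K. ff q x S)
        = (\<Prod>S\<in>?D. ff q x S) * ((\<Prod>S\<in>K. ff q x S) * (\<Prod>S\<in>?U - K. - 1))" by simp
  next
    fix J assume J: "J \<in> {J. ?D \<subseteq> J \<and> J \<subseteq> I v}"
    then show "?D \<union> (J - ?D) = J" by blast
    show "J - ?D \<in> Pow ?U" using J DU[OF g v] by blast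
  qed
  then have "(\<Sum>J\<in>{J. ?D \<subseteq> J \<and> J \<subseteq> I v}. (-1) ^ nat (aff_dim (h J)) * (\<Prod>S\<in>J. ff q x S))
     = (\<Sum>K\<in>Pow ?U. (\<Prod>S\<in>?D. ff q x S) * ((\<Prod>S\<in>K. ff q x S) * (\<Prod>S\<in>?U - K. - 1)))" by simp
  also have "\<dots> = (\<Prod>S\<in>?D. ff q x S) * (\<Sum>K\<in>Pow ?U. (\<Prod>S\<in>K. ff q x S) * (\<Prod>S\<in>?U - K. - 1))"
    by (simp add: sum_distrib_left)
  also have "\<dots> = (\<Prod>S\<in>?D. ff q x S) * (\<Prod>S\<in>?U. ff q x S + - 1)"
    by (subst prod_add[OF fU]) (rule refl)
  finally show ?thesis by simp
qed

end

lemma generic_vec: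
  fixes X Pos :: "'a::euclidean_space set"
  assumes fX: "finite X" and fP: "finite Pos" and X0: "0 \<notin> X" and c0: "\<forall>p\<in>Pos. c0 \<bullet> p > 0"
  shows "\<exists>c. (\<forall>p\<in>Pos. c \<bullet> p > 0) \<and> (\<forall>x\<in>X. c \<bullet> x \<noteq> 0)"
  using fX X0
proof (induction X rule: finite_induct)
  case empty then show ?case using c0 by blast
next
  case (insert e X)
  then obtain c where c: "\<forall>p\<in>Pos. c \<bullet> p > 0" "\<forall>x\<in>X. c \<bullet> x \<noteq> 0" by auto
  have e0: "e \<noteq> 0" using insert by auto
  have tl: "\<And>y. ((\<lambda>t. (c + t *\<^sub>R e) \<bullet> y) \<longlongrightarrow> c \<bullet> y) (at_right 0)"
  proof -
    fix y
    have "((\<lambda>t. c \<bullet> y + t * (e \<bullet> y)) \<longlongrightarrow> c \<bullet> y + 0 * (e \<bullet> y)) (at_right 0)"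
      by (intro tendsto_intros)
    then show "((\<lambda>t. (c + t *\<^sub>R e) \<bullet> y) \<longlongrightarrow> c \<bullet> y) (at_right 0)" by (simp add: inner_add_left)
  qed
  have ev1: "\<forall>\<^sub>F t in at_right 0. \<forall>p\<in>Pos. (c + t *\<^sub>R e) \<bullet> p > 0"
    by (rule eventually_ball_finite[OF fP]) (use c(1) tl order_tendstoD in blast)
  have ev2: "\<forall>\<^sub>F t in at_right 0. \<forall>x\<in>X. (c + t *\<^sub>R e) \<bullet> x \<noteq> 0"
    by (rule eventually_ball_finite[OF insert(1)]) (use c(2) tl tendsto_imp_eventually_ne in blast)
  have ev3: "\<forall>\<^sub>F t in at_right 0. (c + t *\<^sub>R e) \<bullet> e \<noteq> 0"
  proof (cases "c \<bullet> e = 0")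
    case True
    have "e \<bullet> e > 0" using e0 by simp
    show ?thesis
    proof (rule eventually_mono[OF eventually_at_right_less[of "0::real"]])
      fix t :: real assume t: "0 < t"
      have "(c + t *\<^sub>R e) \<bullet> e = t * (e \<bullet> e)" using True by (simp add: inner_add_left)
      also have "\<dots> > 0" using t \<open>e \<bullet> e > 0\<close> by simp
      finally show "(c + t *\<^sub>R e) \<bullet> e \<noteq> 0" by simp
    qed
  next
    case False then show ?thesis using tl tendsto_imp_eventually_ne by blast
  qed
  obtain t where "\<forall>p\<in>Pos. (c + t *\<^sub>R e) \<bullet> p > 0" "\<forall>x\<in>X. (c + t *\<^sub>R e) \<bullet> x \<noteq> 0" "(c + t *\<^sub>R e) \<bullet> e \<noteq> 0"
    using eventually_happens'[OF _ eventually_conj[OF ev1 eventually_conj[OF ev2 ev3]]] by auto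
  then show ?case by blast
qed

context sp begin

lemma gen_exists: assumes "\<forall>v\<in>V. c0 \<bullet> (x - v) > 0"
  shows "\<exists>c. gen c \<and> (\<forall>v\<in>V. c \<bullet> (x - v) > 0)"
proof -
  let ?X = "\<Union>v\<in>V. e v ` I v"
  have fX: "finite ?X" using finite_V finite_I by simp
  have X0: "0 \<notin> ?X"
  proof
    assume "0 \<in> ?X"
    then obtain v S where vS: "v \<in> V" "S \<in> I v" "e v S = 0" by (metis (no_types, lifting) UN_E imageE)
    have "a S \<bullet> e v S = -1" using e_prop[OF vS(1,2,2)] by simp
    then show False using vS by simp
  qed
  obtain c where c: "\<forall>p\<in>(\<lambda>v. x - v) ` V. c \<bullet> p > 0" "\<forall>y\<in>?X. c \<bullet> y \<noteq> 0"
    using generic_vec[OF fX _ X0, of "(\<lambda>v. x - v) ` V" c0] finite_V assms by auto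
  then show ?thesis unfolding gen_def by auto
qed

lemma rhs_eq: assumes g: "gen c"
  shows "(\<Sum>F\<in>{F. F face_of P \<and> F \<noteq> {}}. (-1) ^ nat (aff_dim F) * wchar (tangent_cone P F) (cone_weight P F q) x)
    = (\<Sum>v\<in>V. (\<Prod>S\<in>Dn c v. ff q x S) * (\<Prod>S\<in>Up c v. ff q x S - 1))"
proof -
  have "(\<Sum>F\<in>{F. F face_of P \<and> F \<noteq> {}}. (-1) ^ nat (aff_dim F) * wchar (tangent_cone P F) (cone_weight P F q) x)
     = (\<Sum>v\<in>V. \<Sum>J\<in>{J. Dn c v \<subseteq> J \<and> J \<subseteq> I v}. (-1) ^ nat (aff_dim (h J)) * wchar (tangent_cone P (h J)) (cone_weight P (h J) q) x)"
    by (rule face_sum[OF g])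
  also have "\<dots> = (\<Sum>v\<in>V. \<Sum>J\<in>{J. Dn c v \<subseteq> J \<and> J \<subseteq> I v}. (-1) ^ nat (aff_dim (h J)) * (\<Prod>S\<in>J. ff q x S))"
    by (intro sum.cong refl) (simp add: wchar_cone)
  also have "\<dots> = (\<Sum>v\<in>V. (\<Prod>S\<in>Dn c v. ff q x S) * (\<Prod>S\<in>Up c v. ff q x S - 1))"
    by (intro sum.cong refl) (simp add: vertex_term[OF g])
  finally show ?thesis .
qed

lemma outside: assumes x: "x \<notin> P"
  shows "(\<Sum>F\<in>{F. F face_of P \<and> F \<noteq> {}}. (-1) ^ nat (aff_dim F) * wchar (tangent_cone P F) (cone_weight P F q) x) = 0"
proof -
  obtain a0 \<beta> where ab0: "a0 \<bullet> x < \<beta>" "\<forall>y\<in>P. \<beta> < a0 \<bullet> y"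
    using separating_hyperplane_closed_point[OF convexP closedP x] by blast
  have "\<forall>v\<in>V. (- a0) \<bullet> (x - v) > 0"
  proof
    fix v assume "v \<in> V"
    then have "\<beta> < a0 \<bullet> v" using ab0 V_P by blast
    then show "(- a0) \<bullet> (x - v) > 0" using ab0(1) by (simp add: inner_diff_right)
  qed
  then obtain c where g: "gen c" and cx: "\<forall>v\<in>V. c \<bullet> (x - v) > 0" using gen_exists by blast
  have z: "(\<Prod>S\<in>Dn c v. ff q x S) * (\<Prod>S\<in>Up c v. ff q x S - 1) = 0" if v: "v \<in> V" for v
  proof (rule ccontr)
    assume ne: "(\<Prod>S\<in>Dn c v. ff q x S) * (\<Prod>S\<in>Up c v. ff q x S - 1) \<noteq> 0"
    have fD: "finite (Dn c v)" by (rule finite_subset[OF Dn_I finite_I])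
    have fU: "finite (Up c v)" by (rule finite_subset[OF Up_I finite_I])
    have D: "\<forall>S\<in>Dn c v. sg S x \<ge> 0"
    proof
      fix S assume S: "S \<in> Dn c v"
      have "ff q x S \<noteq> 0" using ne S fD by auto
      then show "sg S x \<ge> 0" unfolding ff_def by (auto split: if_splits)
    qed
    have U: "\<forall>S\<in>Up c v. sg S x \<le> 0"
    proof
      fix S assume S: "S \<in> Up c v"
      have "ff q x S - 1 \<noteq> 0" using ne S fU by auto
      then show "sg S x \<le> 0" unfolding ff_def by (auto split: if_splits)
    qed
    have "\<forall>S\<in>I v. sg S x * (c \<bullet> e v S) \<le> 0"
    proof
      fix S assume S: "S \<in> I v"
      then have "S \<in> Dn c v \<or> S \<in> Up c v" using DU[OF g v] by blast
      then show "sg S x * (c \<bullet> e v S) \<le> 0"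
      proof
        assume "S \<in> Dn c v"
        then show ?thesis using D unfolding Dn_def by (simp add: mult_nonneg_nonpos)
      next
        assume "S \<in> Up c v"
        then show ?thesis using U unfolding Up_def by (simp add: mult_nonpos_nonneg)
      qed
    qed
    then have "c \<bullet> x - c \<bullet> v \<le> 0" using phi_diff[OF v] by (simp add: sum_nonpos)
    moreover have "c \<bullet> (x - v) > 0" using cx v by blast
    ultimately show False by (simp add: inner_diff_right)
  qed
  have "(\<Sum>v\<in>V. (\<Prod>S\<in>Dn c v. ff q x S) * (\<Prod>S\<in>Up c v. ff q x S - 1)) = 0"
    by (rule sum.neutral) (use z in blast)
  then show ?thesis using rhs_eq[OF g] by simp
qed

end

context sp begin

lemma gen_exists0: "\<exists>c. gen c"
proof -
  let ?X = "\<Union>v\<in>V. e v ` I v"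
  have fX: "finite ?X" using finite_V finite_I by simp
  have X0: "0 \<notin> ?X"
  proof
    assume "0 \<in> ?X"
    then obtain v S where vS: "v \<in> V" "S \<in> I v" "e v S = 0" by (metis (no_types, lifting) UN_E imageE)
    have "a S \<bullet> e v S = -1" using e_prop[OF vS(1,2,2)] by simp
    then show False using vS by simp
  qed
  obtain c where c: "\<forall>y\<in>?X. c \<bullet> y \<noteq> 0"
    using generic_vec[OF fX finite.emptyI X0, of 0] by auto
  then show ?thesis unfolding gen_def by auto
qed

lemma count_one: assumes g: "gen c" and B: "B \<subseteq> Fs" and ne: "h B \<noteq> {}"
  shows "{v\<in>V. Up c v \<subseteq> B \<and> B \<subseteq> I v} = {v. v \<in> V \<and> Up c v \<subseteq> B \<and> B \<subseteq> I v}" 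
    and "card {v\<in>V. Up c v \<subseteq> B \<and> B \<subseteq> I v} = 1"
proof -
  show "{v\<in>V. Up c v \<subseteq> B \<and> B \<subseteq> I v} = {v. v \<in> V \<and> Up c v \<subseteq> B \<and> B \<subseteq> I v}" by simp
  have hf: "h B face_of P" by (rule h_face[OF B])
  obtain v where v: "v \<in> h B" "v \<in> V" "\<forall>y\<in>h B. (-c) \<bullet> v \<le> (-c) \<bullet> y"
    using min_vertex[OF hf ne, of "-c"] by blast
  have BI: "B \<subseteq> I v"
  proof
    fix S assume S: "S \<in> B"
    then have "sg S v = 0" "v \<in> P" using v(1) unfolding h_def by auto
    then have "v \<in> S" using facet_eq[of S] S B by blast
    then show "S \<in> I v" using S B unfolding I_def by blast
  qed
  have "Dn (-c) v \<subseteq> B" by (rule min_Dn[OF v(2) BI v(3)])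
  then have UB: "Up c v \<subseteq> B" by (simp add: Dn_neg)
  have g': "gen (-c)" using g gen_neg by simp
  have "{v\<in>V. Up c v \<subseteq> B \<and> B \<subseteq> I v} = {v}"
  proof (intro set_eqI iffI)
    fix w assume w: "w \<in> {v\<in>V. Up c v \<subseteq> B \<and> B \<subseteq> I v}"
    show "w \<in> {v}"
    proof (rule ccontr)
      assume "w \<notin> {v}"
      then have ne: "w \<noteq> v" by simp
      have wV: "w \<in> V" "Up c w \<subseteq> B" "B \<subseteq> I w" using w by auto
      have "(-c) \<bullet> v < (-c) \<bullet> w"
        by (rule strict_min[OF g' v(2) BI]) (use UB Dn_neg v_h[OF wV(1,3)] ne in auto)
      moreover have "(-c) \<bullet> w < (-c) \<bullet> v"
        by (rule strict_min[OF g' wV(1) wV(3)]) (use wV Dn_neg v_h[OF v(2) BI] ne in auto)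
      ultimately show False by simp
    qed
  next
    fix w assume "w \<in> {v}"
    then show "w \<in> {v\<in>V. Up c v \<subseteq> B \<and> B \<subseteq> I v}" using v(2) UB BI by simp
  qed
  then show "card {v\<in>V. Up c v \<subseteq> B \<and> B \<subseteq> I v} = 1" by simp
qed

lemma inside: assumes x: "x \<in> P"
  shows "(\<Sum>F\<in>{F. F face_of P \<and> F \<noteq> {}}. (-1) ^ nat (aff_dim F) * wchar (tangent_cone P F) (cone_weight P F q) x)
     = (\<Prod>S\<in>Fs. ff q x S)"
proof -
  obtain c where g: "gen c" using gen_exists0 by blast
  define gg where "gg S = (if sg S x = 0 then q S - 1 else 0)" for S
  have ffg: "\<And>S. S \<in> Fs \<Longrightarrow> ff q x S = gg S + 1"
    using sg_ge x unfolding ff_def gg_def by force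
  have fFs: "finite Fs" by (rule finite_Fs)
  have termv: "(\<Prod>S\<in>Dn c v. ff q x S) * (\<Prod>S\<in>Up c v. ff q x S - 1)
      = (\<Sum>B\<in>{B\<in>Pow Fs. Up c v \<subseteq> B \<and> B \<subseteq> I v}. (\<Prod>S\<in>B. gg S))" if v: "v \<in> V" for v
  proof -
    let ?D = "Dn c v" and ?U = "Up c v"
    have fD: "finite ?D" by (rule finite_subset[OF Dn_I finite_I])
    have fU: "finite ?U" by (rule finite_subset[OF Up_I finite_I])
    have "(\<Prod>S\<in>?D. ff q x S) = (\<Prod>S\<in>?D. gg S + 1)"
      by (rule prod.cong) (use ffg Dn_I I_Fs in blast)+
    also have "\<dots> = (\<Sum>K\<in>Pow ?D. (\<Prod>S\<in>K. gg S) * (\<Prod>S\<in>?D - K. 1))" by (rule prod_add[OF fD])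
    finally have 1: "(\<Prod>S\<in>?D. ff q x S) = (\<Sum>K\<in>Pow ?D. (\<Prod>S\<in>K. gg S))" by simp
    have 2: "(\<Prod>S\<in>?U. ff q x S - 1) = (\<Prod>S\<in>?U. gg S)"
      by (rule prod.cong) (use ffg Up_I I_Fs in force)+
    have "(\<Sum>K\<in>Pow ?D. (\<Prod>S\<in>K. gg S)) * (\<Prod>S\<in>?U. gg S) = (\<Sum>K\<in>Pow ?D. (\<Prod>S\<in>K. gg S) * (\<Prod>S\<in>?U. gg S))"
      by (simp add: sum_distrib_right)
    also have "\<dots> = (\<Sum>B\<in>{B\<in>Pow Fs. ?U \<subseteq> B \<and> B \<subseteq> I v}. (\<Prod>S\<in>B. gg S))"
    proof (rule sum.reindex_bij_witness[of _ "\<lambda>B. B - ?U" "\<lambda>K. K \<union> ?U"])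
      fix K assume K: "K \<in> Pow ?D"
      then show "K \<union> ?U - ?U = K" using DU_disj by blast
      show "K \<union> ?U \<in> {B\<in>Pow Fs. ?U \<subseteq> B \<and> B \<subseteq> I v}" using K Dn_I Up_I I_Fs by blast
      have fK: "finite K" using K fD finite_subset by blast
      have dj: "K \<inter> ?U = {}" using K DU_disj by blast
      show "(\<Prod>S\<in>K \<union> ?U. gg S) = (\<Prod>S\<in>K. gg S) * (\<Prod>S\<in>?U. gg S)"
        by (rule prod.union_disjoint[OF fK fU dj])
    next
      fix B assume B: "B \<in> {B\<in>Pow Fs. ?U \<subseteq> B \<and> B \<subseteq> I v}"
      then show "B - ?U \<union> ?U = B" by blast
      show "B - ?U \<in> Pow ?D" using B DU[OF g v] by blast
    qed
    finally show ?thesis using 1 2 by simp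
  qed
  have fin2: "finite (Pow Fs)" using fFs by simp
  have "(\<Sum>F\<in>{F. F face_of P \<and> F \<noteq> {}}. (-1) ^ nat (aff_dim F) * wchar (tangent_cone P F) (cone_weight P F q) x)
      = (\<Sum>v\<in>V. (\<Prod>S\<in>Dn c v. ff q x S) * (\<Prod>S\<in>Up c v. ff q x S - 1))" by (rule rhs_eq[OF g])
  also have "\<dots> = (\<Sum>v\<in>V. \<Sum>B\<in>{B\<in>Pow Fs. Up c v \<subseteq> B \<and> B \<subseteq> I v}. (\<Prod>S\<in>B. gg S))"
    by (rule sum.cong[OF refl]) (rule termv)
  also have "\<dots> = (\<Sum>B\<in>Pow Fs. \<Sum>v\<in>{v\<in>V. Up c v \<subseteq> B \<and> B \<subseteq> I v}. (\<Prod>S\<in>B. gg S))"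
    by (rule sum.swap_restrict[OF finite_V fin2])
  also have "\<dots> = (\<Sum>B\<in>Pow Fs. (\<Prod>S\<in>B. gg S))"
  proof (rule sum.cong[OF refl])
    fix B assume B: "B \<in> Pow Fs"
    show "(\<Sum>v\<in>{v\<in>V. Up c v \<subseteq> B \<and> B \<subseteq> I v}. (\<Prod>S\<in>B. gg S)) = (\<Prod>S\<in>B. gg S)"
    proof (cases "(\<Prod>S\<in>B. gg S) = 0")
      case True then show ?thesis by simp
    next
      case False
      have fB: "finite B" using B fFs finite_subset by blast
      have "\<forall>S\<in>B. gg S \<noteq> 0" using False fB by auto
      then have "\<forall>S\<in>B. sg S x = 0" unfolding gg_def by (auto split: if_splits)
      then have "x \<in> h B" using x unfolding h_def by blast
      then have "h B \<noteq> {}" by blast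
      moreover have BF: "B \<subseteq> Fs" using B by simp
      ultimately have "card {v\<in>V. Up c v \<subseteq> B \<and> B \<subseteq> I v} = 1" using count_one(2)[OF g BF] by blast
      then show ?thesis by simp
    qed
  qed
  also have "\<dots> = (\<Sum>B\<in>Pow Fs. (\<Prod>S\<in>B. gg S) * (\<Prod>S\<in>Fs - B. 1))" by simp
  also have "\<dots> = (\<Prod>S\<in>Fs. gg S + 1)" by (rule prod_add[OF fFs, symmetric])
  also have "\<dots> = (\<Prod>S\<in>Fs. ff q x S)" by (rule prod.cong) (use ffg in auto)
  finally show ?thesis .
qed

end

theorem mainTheorem1:
  fixes P :: "'a::euclidean_space set" and q :: "'a set \<Rightarrow> complex"
  assumes "simple_polytope P"
    and "aff_dim P = int DIM('a)"
  shows "wchar P q =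
    (\<lambda>x. \<Sum>F\<in>{F. F face_of P \<and> F \<noteq> {}}.
        (-1) ^ nat (aff_dim F) * wchar (tangent_cone P F) (cone_weight P F q) x)"
proof -
  have poly: "polyhedron P" using assms(1) by (simp add: simple_polytope_def polytope_imp_polyhedron)
  have "\<forall>S. \<exists>ab. S facet_of P \<longrightarrow> fst ab \<noteq> 0 \<and> P \<subseteq> {x. fst ab \<bullet> x \<le> snd ab} \<and> S = P \<inter> {x. fst ab \<bullet> x = snd ab}"
  proof
    fix S
    show "\<exists>ab. S facet_of P \<longrightarrow> fst ab \<noteq> 0 \<and> P \<subseteq> {x. fst ab \<bullet> x \<le> snd ab} \<and> S = P \<inter> {x. fst ab \<bullet> x = snd ab}"
    proof (cases "S facet_of P")
      case True
      then obtain a b where "a \<noteq> 0" "P \<subseteq> {x. a \<bullet> x \<le> b}" "S = P \<inter> {x. a \<bullet> x = b}"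
        using facet_of_polyhedron[OF poly] by blast
      then show ?thesis by (intro exI[of _ "(a, b)"]) simp
    qed simp
  qed
  then obtain ab where ab: "\<And>S. S facet_of P \<Longrightarrow> fst (ab S) \<noteq> 0 \<and> P \<subseteq> {x. fst (ab S) \<bullet> x \<le> snd (ab S)} \<and> S = P \<inter> {x. fst (ab S) \<bullet> x = snd (ab S)}"
    by metis
  interpret sp P "\<lambda>S. fst (ab S)" "\<lambda>S. snd (ab S)"
    by unfold_locales (use assms ab in auto)
  show ?thesis
  proof
    fix x
    show "wchar P q x = (\<Sum>F\<in>{F. F face_of P \<and> F \<noteq> {}}.
        (-1) ^ nat (aff_dim F) * wchar (tangent_cone P F) (cone_weight P F q) x)"
    proof (cases "x \<in> P")
      case True then show ?thesis using inside wchar_P by simp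
    next
      case False
      then have "wchar P q x = 0" unfolding wchar_def by simp
      then show ?thesis using outside[OF False] by simp
    qed
  qed
qed


end
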